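(* Let $n\ge 118$ be an integer and let $k$ be real with $\frac{n-10}{2}-\sqrt n<k<\frac{n-10}{2}+\sqrt n$. Set $p=1+\frac8k$ and $q=\frac{n-8}{2}$. Then $pJ_1-q_1>0$, where $$-J_1=k(k+2-n)(k+4)(k+6-n)(k+6)(k+8-n)+(k+2)(k+4-n)(k+4)(k+6-n)(k+6)(k+8-n)+k(k+2-n)(k+2)(k+4-n)(k+6)(k+8-n)+k(k+2-n)(k+2)(k+4-n)(k+4)(k+6-n),$$ $$q_1=2\big((q+2)(n-q-4)+q(n-q-2)\big)\,q(q+2-n)(q+2)(q+4-n).$$
   Context: Here $k=\frac{8}{p-1}$ corresponds to the homogeneity degree of solutions of $\Delta^4u=|u|^{p-1}u$; the claim is a purely algebraic inequality in the real variable $k$ and the integer $n$. *)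

theory Defs
  imports Complex_Main
begin

end

theory Submission
  imports Defs
begin

lemma ev:
  fixes N t :: real
  assumes "0 \<le> N" "t^2 \<le> N" "i + m = d"
  shows "0 \<le> N^i*(t^2)^m \<and> N^i*(t^2)^m \<le> N^d"
proof -
  have a: "(t^2)^m \<le> N^m" by (rule power_mono) (use assms in auto)
  have b: "0 \<le> (t^2)^m" by simp
  have c: "N^i*(t^2)^m \<le> N^i*N^m" using a assms(1) by (simp add: mult_left_mono)
  have d: "0 \<le> N^i*(t^2)^m" using b assms(1) by simp
  have e: "N^i*N^m = N^d" using assms(3) by (simp add: power_add[symmetric])
  show ?thesis using c d e by simp
qed

lemma od:
  fixes N t :: real
  assumes "0 \<le> N" "t^2 \<le> N" "\<bar>t\<bar> \<le> N/10" "i + m + 1 = e"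
  shows "- (N^e/10) \<le> N^i*t*(t^2)^m \<and> N^i*t*(t^2)^m \<le> N^e/10"
proof -
  have x: "0 \<le> N^i*(t^2)^m \<and> N^i*(t^2)^m \<le> N^(i+m)" using ev[OF assms(1,2)] by simp
  have d: "0 \<le> N^i*(t^2)^m" using assms(1) by simp
  have "\<bar>N^i*t*(t^2)^m\<bar> = (N^i*(t^2)^m) * \<bar>t\<bar>" using d assms(1) by (simp add: abs_mult)
  also have "\<dots> \<le> N^(i+m) * (N/10)" using x d assms(3) by (intro mult_mono) auto
  also have "\<dots> = N^e/10"
  proof -
    have "e = Suc (i+m)" using assms(4) by simp
    then show ?thesis by (simp add: power_Suc2)
  qed
  finally show ?thesis by linarith
qed

lemma lin:
  fixes T M0 M1 M2 M3 M4 M5 M6 x0 x1 x2 x3 x4 x5 x6 x7 x8 x9 x10 x11 x12 x13 x14 x15 x16 x17 x18 x19 x20 x21 x22 x23 x24 x25 x26 x27 :: real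
  assumes "0 \<le> T" "118*M5 \<le> M6" "118*M4 \<le> M5" "118*M3 \<le> M4" "118*M2 \<le> M3" "118*M1 \<le> M2" "118 \<le> M1" "M0 = 1"
    "0 \<le> x0 \<and> x0 \<le> M0"
    "- (M1/10) \<le> x1 \<and> x1 \<le> M1/10"
    "0 \<le> x2 \<and> x2 \<le> M1"
    "- (M2/10) \<le> x3 \<and> x3 \<le> M2/10"
    "0 \<le> x4 \<and> x4 \<le> M2"
    "- (M3/10) \<le> x5 \<and> x5 \<le> M3/10"
    "0 \<le> x6 \<and> x6 \<le> M3"
    "- (M4/10) \<le> x7 \<and> x7 \<le> M4/10"
    "0 \<le> x8 \<and> x8 \<le> M1"
    "- (M2/10) \<le> x9 \<and> x9 \<le> M2/10"
    "0 \<le> x10 \<and> x10 \<le> M2"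
    "- (M3/10) \<le> x11 \<and> x11 \<le> M3/10"
    "0 \<le> x12 \<and> x12 \<le> M3"
    "0 \<le> x13 \<and> x13 \<le> M4"
    "0 \<le> x14 \<and> x14 \<le> M2"
    "- (M3/10) \<le> x15 \<and> x15 \<le> M3/10"
    "0 \<le> x16 \<and> x16 \<le> M3"
    "- (M4/10) \<le> x17 \<and> x17 \<le> M4/10"
    "0 \<le> x18 \<and> x18 \<le> M4"
    "- (M5/10) \<le> x19 \<and> x19 \<le> M5/10"
    "0 \<le> x20 \<and> x20 \<le> M3"
    "- (M4/10) \<le> x21 \<and> x21 \<le> M4/10"
    "0 \<le> x22 \<and> x22 \<le> M4"
    "0 \<le> x23 \<and> x23 \<le> M5"
    "0 \<le> x24 \<and> x24 \<le> M4"
    "- (M5/10) \<le> x25 \<and> x25 \<le> M5/10"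
    "0 \<le> x26 \<and> x26 \<le> M5"
    "0 \<le> x27 \<and> x27 \<le> M5"
  shows "M6/8 + T - 108*x0 + 36*x1 + 228*x2 - 76*x3 - 132*x4 + 44*x5 + 12*x6 - 4*x7 - 1126*x8 + 224*x9 - 150*x10 + 32*x11 - 2*x12 - 2*x13 - 157*x14 + 47*x15 - 10*x16 - 2*x17 - 9*x18 + 3*x19 + (351/2)*x20 - 28*x21 + 11*x22 + (3/2)*x23 + (3/4)*x24 - (9/4)*x25 + (9/4)*x26 - (51/8)*x27 > 0"
  using assms by linarith
lemma idenL:
  fixes k N H t :: real
  assumes hk: "k = H-5+t" and hN: "N = 2*H"
  shows "(k+8)*(- (k*(k+2-N)*(k+4)*(k+6-N)*(k+6)*(k+8-N) + (k+2)*(k+4-N)*(k+4)*(k+6-N)*(k+6)*(k+8-N) + k*(k+2-N)*(k+2)*(k+4-N)*(k+6)*(k+8-N) + k*(k+2-N)*(k+2)*(k+4-N)*(k+4)*(k+6-N))) - k*(2 * ((((N - 8) / 2)+2)*(N-((N - 8) / 2)-4) + ((N - 8) / 2)*(N-((N - 8) / 2)-2)) * ((N - 8) / 2)*(((N - 8) / 2)+2-N)*(((N - 8) / 2)+2)*(((N - 8) / 2)+4-N)) = N^6/8 + 3/8*N^4*(N-t^2)*(N+2*t) - 108*(N^0*(t^2)^0) + 36*(N^0*t*(t^2)^0) + 228*(N^0*(t^2)^1) - 76*(N^0*t*(t^2)^1) - 132*(N^0*(t^2)^2) + 44*(N^0*t*(t^2)^2) + 12*(N^0*(t^2)^3) -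 4*(N^0*t*(t^2)^3) - 1126*(N^1*(t^2)^0) + 224*(N^1*t*(t^2)^0) - 150*(N^1*(t^2)^1) + 32*(N^1*t*(t^2)^1) - 2*(N^1*(t^2)^2) - 2*(N^1*(t^2)^3) - 157*(N^2*(t^2)^0) + 47*(N^2*t*(t^2)^0) - 10*(N^2*(t^2)^1) - 2*(N^2*t*(t^2)^1) - 9*(N^2*(t^2)^2) + 3*(N^2*t*(t^2)^2) + (351/2)*(N^3*(t^2)^0) - 28*(N^3*t*(t^2)^0) + 11*(N^3*(t^2)^1) + (3/2)*(N^3*(t^2)^2) + (3/4)*(N^4*(t^2)^0) - (9/4)*(N^4*t*(t^2)^0) + (9/4)*(N^4*(t^2)^1) - (51/8)*(N^5*(t^2)^0)"
proof -
  have q: "(N - 8) / 2 = H - 4" using hN by simp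
  show ?thesis unfolding q unfolding hk hN by algebra
qed

lemma pstep:
  fixes N :: real
  assumes "118 \<le> N" "Suc d = e"
  shows "118*N^d \<le> N^e"
proof -
  have "118*N^d \<le> N*N^d" using assms(1) by (intro mult_right_mono) auto
  then show ?thesis using assms(2) by auto
qed

lemma final_step:
  fixes k A B :: real
  assumes "k > 0" "(k+8)*A - k*B > 0"
  shows "(1 + 8/k)*A - B > 0"
proof -
  have "(1 + 8/k)*A - B = ((k+8)*A - k*B)/k" using assms(1) by (simp add: field_simps)
  then show ?thesis using assms by simp
qed

theorem lemma8p2:
  fixes n :: nat and k :: real
  assumes hn: "n \<ge> 118"
    and hk1: "(real n - 10) / 2 - sqrt (real n) < k"
    and hk2: "k < (real n - 10) / 2 + sqrt (real n)"
  shows "let N = real n; p = 1 + 8 / k; q = (N - 8) / 2;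
             J1 = - (k*(k+2-N)*(k+4)*(k+6-N)*(k+6)*(k+8-N)
                   + (k+2)*(k+4-N)*(k+4)*(k+6-N)*(k+6)*(k+8-N)
                   + k*(k+2-N)*(k+2)*(k+4-N)*(k+6)*(k+8-N)
                   + k*(k+2-N)*(k+2)*(k+4-N)*(k+4)*(k+6-N));
             q1 = 2 * ((q+2)*(N-q-4) + q*(N-q-2)) * q*(q+2-N)*(q+2)*(q+4-N)
         in p * J1 - q1 > 0"
proof -
  define N where "N = real n"
  define t where "t = k - (N - 10)/2"
  have hN: "N \<ge> 118" using hn unfolding N_def by simp
  have hN0: "0 \<le> N" using hN by simp
  have tabs: "\<bar>t\<bar> < sqrt N" using hk1 hk2 unfolding t_def N_def by auto
  have ht2': "t^2 < N"
  proof -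
    have "t^2 = \<bar>t\<bar>^2" by simp
    also have "\<dots> < (sqrt N)^2" using tabs by (intro power_strict_mono) auto
    also have "\<dots> = N" using hN0 by simp
    finally show ?thesis .
  qed
  have ht2: "t^2 \<le> N" using ht2' by simp
  have sq: "sqrt N \<le> N/10"
  proof -
    have "(sqrt N)^2 \<le> (N/10)^2" using hN hN0 by (simp add: power2_eq_square)
    then show ?thesis using hN power2_le_imp_le[of "sqrt N" "N/10"] by simp
  qed
  have hta: "\<bar>t\<bar> \<le> N/10" using tabs sq by simp
  have kpos: "k > 0" using hta hN unfolding t_def abs_le_iff by (auto simp: field_simps)
  have ktk: "k = (N-10)/2 + t" unfolding t_def by simp
  have Npt: "N + 2*t > 0" using hta hN unfolding abs_le_iff by (auto simp: field_simps)
  have top: "0 \<le> 3/8*N^4*(N-t^2)*(N+2*t)" using Npt ht2 hN0 by simp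
  have iden: "(k+8)*(- (k*(k+2-N)*(k+4)*(k+6-N)*(k+6)*(k+8-N) + (k+2)*(k+4-N)*(k+4)*(k+6-N)*(k+6)*(k+8-N) + k*(k+2-N)*(k+2)*(k+4-N)*(k+6)*(k+8-N) + k*(k+2-N)*(k+2)*(k+4-N)*(k+4)*(k+6-N))) - k*(2 * ((((N - 8) / 2)+2)*(N-((N - 8) / 2)-4) + ((N - 8) / 2)*(N-((N - 8) / 2)-2)) * ((N - 8) / 2)*(((N - 8) / 2)+2-N)*(((N - 8) / 2)+2)*(((N - 8) / 2)+4-N)) = N^6/8 + 3/8*N^4*(N-t^2)*(N+2*t) - 108*(N^0*(t^2)^0) + 36*(N^0*t*(t^2)^0) + 228*(N^0*(t^2)^1) - 76*(N^0*t*(t^2)^1) - 132*(N^0*(t^2)^2) + 44*(N^0*t*(t^2)^2) + 12*(N^0*(t^2)^3) - 4*(N^0*t*(t^2)^3) - 1126*(N^1*(t^2)^0) + 224*(N^1*t*(t^2)^0) - 150*(N^1*(t^2)^1) + 32*(N^1*t*(t^2)^1) - 2*(N^1*(t^2)^2) - 2*(N^1*(t^2)^3) - 157*(N^2*(t^2)^0) + 47*(N^2*t*(t^2)^0) - 10*(N^2*(t^2)^1) - 2*(N^2*t*(t^2)^1) - 9*(N^2*(t^2)^2) + 3*(N^2*t*(t^2)^2) + (351/2)*(N^3*(t^2)^0) - 28*(N^3*t*(t^2)^0) + 11*(N^3*(t^2)^1) + (3/2)*(N^3*(t^2)^2) + (3/4)*(N^4*(t^2)^0) - (9/4)*(N^4*t*(t^2)^0)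 + (9/4)*(N^4*(t^2)^1) - (51/8)*(N^5*(t^2)^0)"
    by (rule idenL[where H="N/2"]) (simp_all add: ktk)
  have b0: "0 \<le> N^0*(t^2)^0 \<and> N^0*(t^2)^0 \<le> N^0" using ev[OF hN0 ht2, where i=0 and m=0 and d=0] by simp
  have b1: "- (N^1/10) \<le> N^0*t*(t^2)^0 \<and> N^0*t*(t^2)^0 \<le> (N^1/10)" using od[OF hN0 ht2 hta, where i=0 and m=0 and e=1] by simp
  have b2: "0 \<le> N^0*(t^2)^1 \<and> N^0*(t^2)^1 \<le> N^1" using ev[OF hN0 ht2, where i=0 and m=1 and d=1] by simp
  have b3: "- (N^2/10) \<le> N^0*t*(t^2)^1 \<and> N^0*t*(t^2)^1 \<le> (N^2/10)" using od[OF hN0 ht2 hta, where i=0 and m=1 and e=2] by simp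
  have b4: "0 \<le> N^0*(t^2)^2 \<and> N^0*(t^2)^2 \<le> N^2" using ev[OF hN0 ht2, where i=0 and m=2 and d=2] by simp
  have b5: "- (N^3/10) \<le> N^0*t*(t^2)^2 \<and> N^0*t*(t^2)^2 \<le> (N^3/10)" using od[OF hN0 ht2 hta, where i=0 and m=2 and e=3] by simp
  have b6: "0 \<le> N^0*(t^2)^3 \<and> N^0*(t^2)^3 \<le> N^3" using ev[OF hN0 ht2, where i=0 and m=3 and d=3] by simp
  have b7: "- (N^4/10) \<le> N^0*t*(t^2)^3 \<and> N^0*t*(t^2)^3 \<le> (N^4/10)" using od[OF hN0 ht2 hta, where i=0 and m=3 and e=4] by simp
  have b8: "0 \<le> N^1*(t^2)^0 \<and> N^1*(t^2)^0 \<le> N^1" using ev[OF hN0 ht2, where i=1 and m=0 and d=1] by simp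
  have b9: "- (N^2/10) \<le> N^1*t*(t^2)^0 \<and> N^1*t*(t^2)^0 \<le> (N^2/10)" using od[OF hN0 ht2 hta, where i=1 and m=0 and e=2] by simp
  have b10: "0 \<le> N^1*(t^2)^1 \<and> N^1*(t^2)^1 \<le> N^2" using ev[OF hN0 ht2, where i=1 and m=1 and d=2] by simp
  have b11: "- (N^3/10) \<le> N^1*t*(t^2)^1 \<and> N^1*t*(t^2)^1 \<le> (N^3/10)" using od[OF hN0 ht2 hta, where i=1 and m=1 and e=3] by simp
  have b12: "0 \<le> N^1*(t^2)^2 \<and> N^1*(t^2)^2 \<le> N^3" using ev[OF hN0 ht2, where i=1 and m=2 and d=3] by simp
  have b13: "0 \<le> N^1*(t^2)^3 \<and> N^1*(t^2)^3 \<le> N^4" using ev[OF hN0 ht2, where i=1 and m=3 and d=4] by simp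
  have b14: "0 \<le> N^2*(t^2)^0 \<and> N^2*(t^2)^0 \<le> N^2" using ev[OF hN0 ht2, where i=2 and m=0 and d=2] by simp
  have b15: "- (N^3/10) \<le> N^2*t*(t^2)^0 \<and> N^2*t*(t^2)^0 \<le> (N^3/10)" using od[OF hN0 ht2 hta, where i=2 and m=0 and e=3] by simp
  have b16: "0 \<le> N^2*(t^2)^1 \<and> N^2*(t^2)^1 \<le> N^3" using ev[OF hN0 ht2, where i=2 and m=1 and d=3] by simp
  have b17: "- (N^4/10) \<le> N^2*t*(t^2)^1 \<and> N^2*t*(t^2)^1 \<le> (N^4/10)" using od[OF hN0 ht2 hta, where i=2 and m=1 and e=4] by simp
  have b18: "0 \<le> N^2*(t^2)^2 \<and> N^2*(t^2)^2 \<le> N^4" using ev[OF hN0 ht2, where i=2 and m=2 and d=4] by simp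
  have b19: "- (N^5/10) \<le> N^2*t*(t^2)^2 \<and> N^2*t*(t^2)^2 \<le> (N^5/10)" using od[OF hN0 ht2 hta, where i=2 and m=2 and e=5] by simp
  have b20: "0 \<le> N^3*(t^2)^0 \<and> N^3*(t^2)^0 \<le> N^3" using ev[OF hN0 ht2, where i=3 and m=0 and d=3] by simp
  have b21: "- (N^4/10) \<le> N^3*t*(t^2)^0 \<and> N^3*t*(t^2)^0 \<le> (N^4/10)" using od[OF hN0 ht2 hta, where i=3 and m=0 and e=4] by simp
  have b22: "0 \<le> N^3*(t^2)^1 \<and> N^3*(t^2)^1 \<le> N^4" using ev[OF hN0 ht2, where i=3 and m=1 and d=4] by simp
  have b23: "0 \<le> N^3*(t^2)^2 \<and> N^3*(t^2)^2 \<le> N^5" using ev[OF hN0 ht2, where i=3 and m=2 and d=5] by simp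
  have b24: "0 \<le> N^4*(t^2)^0 \<and> N^4*(t^2)^0 \<le> N^4" using ev[OF hN0 ht2, where i=4 and m=0 and d=4] by simp
  have b25: "- (N^5/10) \<le> N^4*t*(t^2)^0 \<and> N^4*t*(t^2)^0 \<le> (N^5/10)" using od[OF hN0 ht2 hta, where i=4 and m=0 and e=5] by simp
  have b26: "0 \<le> N^4*(t^2)^1 \<and> N^4*(t^2)^1 \<le> N^5" using ev[OF hN0 ht2, where i=4 and m=1 and d=5] by simp
  have b27: "0 \<le> N^5*(t^2)^0 \<and> N^5*(t^2)^0 \<le> N^5" using ev[OF hN0 ht2, where i=5 and m=0 and d=5] by simp
  have p1: "118*N^5 \<le> N^6" by (rule pstep[OF hN]) simp
  have p2: "118*N^4 \<le> N^5" by (rule pstep[OF hN]) simp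
  have p3: "118*N^3 \<le> N^4" by (rule pstep[OF hN]) simp
  have p4: "118*N^2 \<le> N^3" by (rule pstep[OF hN]) simp
  have p5: "118*N^1 \<le> N^2" by (rule pstep[OF hN]) simp
  have p6: "118 \<le> N^1" using hN by simp
  have p7: "N^0 = 1" by simp
  have E0: "N^6/8 + 3/8*N^4*(N-t^2)*(N+2*t) - 108*(N^0*(t^2)^0) + 36*(N^0*t*(t^2)^0) + 228*(N^0*(t^2)^1) - 76*(N^0*t*(t^2)^1) - 132*(N^0*(t^2)^2) + 44*(N^0*t*(t^2)^2) + 12*(N^0*(t^2)^3) - 4*(N^0*t*(t^2)^3) - 1126*(N^1*(t^2)^0) + 224*(N^1*t*(t^2)^0) - 150*(N^1*(t^2)^1) + 32*(N^1*t*(t^2)^1) - 2*(N^1*(t^2)^2) - 2*(N^1*(t^2)^3) - 157*(N^2*(t^2)^0) + 47*(N^2*t*(t^2)^0) - 10*(N^2*(t^2)^1) - 2*(N^2*t*(t^2)^1) - 9*(N^2*(t^2)^2) + 3*(N^2*t*(t^2)^2) + (351/2)*(N^3*(t^2)^0) - 28*(N^3*t*(t^2)^0) + 11*(N^3*(t^2)^1) + (3/2)*(N^3*(t^2)^2) + (3/4)*(N^4*(t^2)^0) - (9/4)*(N^4*t*(t^2)^0) + (9/4)*(N^4*(t^2)^1) - (51/8)*(N^5*(t^2)^0) > 0"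
    by (rule lin[OF top p1 p2 p3 p4 p5 p6 p7 b0 b1 b2 b3 b4 b5 b6 b7 b8 b9 b10 b11 b12 b13 b14 b15 b16 b17 b18 b19 b20 b21 b22 b23 b24 b25 b26 b27])
  have E: "(k+8)*(- (k*(k+2-N)*(k+4)*(k+6-N)*(k+6)*(k+8-N) + (k+2)*(k+4-N)*(k+4)*(k+6-N)*(k+6)*(k+8-N) + k*(k+2-N)*(k+2)*(k+4-N)*(k+6)*(k+8-N) + k*(k+2-N)*(k+2)*(k+4-N)*(k+4)*(k+6-N))) - k*(2 * ((((N - 8) / 2)+2)*(N-((N - 8) / 2)-4) + ((N - 8) / 2)*(N-((N - 8) / 2)-2)) * ((N - 8) / 2)*(((N - 8) / 2)+2-N)*(((N - 8) / 2)+2)*(((N - 8) / 2)+4-N)) > 0"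
    unfolding iden by (rule E0)
  have fin: "(1 + 8/k)*(- (k*(k+2-N)*(k+4)*(k+6-N)*(k+6)*(k+8-N) + (k+2)*(k+4-N)*(k+4)*(k+6-N)*(k+6)*(k+8-N) + k*(k+2-N)*(k+2)*(k+4-N)*(k+6)*(k+8-N) + k*(k+2-N)*(k+2)*(k+4-N)*(k+4)*(k+6-N))) - (2 * ((((N - 8) / 2)+2)*(N-((N - 8) / 2)-4) + ((N - 8) / 2)*(N-((N - 8) / 2)-2)) * ((N - 8) / 2)*(((N - 8) / 2)+2-N)*(((N - 8) / 2)+2)*(((N - 8) / 2)+4-N)) > 0"
    using final_step[OF kpos E] .
  show ?thesis using fin unfolding Let_def N_def[symmetric] .
qed

end
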